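(* Let $\mathcal{L}:\mathcal{M}_d\to\mathcal{M}_d$ be a unital, reversible Liouvillian with an almost commuting unitary eigenbasis $\{U_i\}_{i\in G}$ associated to a finite abelian group $G$, with $\mathcal{L}(U_i)=\lambda_iU_i$, and let $P_t:V(G)\to V(G)$ be the associated classical semigroup $P_tf=\sum_{i\in G}e^{\lambda_it}\hat f(i)\chi_i$. Then for all $t\geq 0$, $$\|e^{t\mathcal{L}}\|_{2\to4,\frac{\mathbb{1}}{d}}\leq\|P_t\|_{2\to4}.$$
   Context: A Liouvillian generates a semigroup $e^{t\mathcal{L}}$ of completely positive trace-preserving maps; unital: $\mathcal{L}(\mathbb{1})=0$; reversible: $\mathcal{L}=\mathcal{L}^*$ (Hilbert–Schmidt adjoint), so the $\lambda_i$ are real. Almost commuting unitary basis associated to a finite abelian group $G$ with $|G|=d^2$: unitaries $\{U_i\}_{i\in G}\subset\mathcal{M}_d$ with $U_0=\mathbb{1}_d$, $\text{tr}(U_i^\dagger U_j)=d\delta_{ij}$, and for all $i,j$ there are phases $|\phi(i,j)|=|\phi'(i,j)|=1$ with $U_iU_j=\phi(i,j)U_jU_i$ and $U_iU_j=\phi'(i,j)U_{i+j}$. Fix a group isomorphism $i\mapsto\chi_i$ from $G$ to its character group $\hat G$. $V(G)$ is the space of functions $G\to\mathbb{C}$ with $\|f\|_p^p=\frac{1}{|G|}\sum_g|f(g)|^p$, inner product $\langle f,h\rangle=\frac1{|G|}\sum_g\overline{f(g)}h(g)$, $\hat f(i)=\langle\chi_i,f\rangle$, and $\|A\|_{2\to4}=\sup_{f\neq0}\|Af\|_4/\|f\|_2$.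 On $\mathcal{M}_d$: $\|Y\|_{p,\frac{\mathbb{1}}{d}}=d^{-1/p}(\text{tr}|Y|^p)^{1/p}$, $\|S\|_{2\to4,\frac{\mathbb{1}}{d}}=\sup_{X\neq0}\|S(X)\|_{4,\frac{\mathbb{1}}{d}}/\|X\|_{2,\frac{\mathbb{1}}{d}}$. *)

theory Defs
  imports "HOL-Analysis.Analysis"
begin

type_synonym 'n mat = "complex^'n^'n"

definition cscale :: "complex \<Rightarrow> 'n::finite mat \<Rightarrow> 'n mat" (infixr "*c" 75) where
  "c *c X = (\<chi> i j. c * X$i$j)"

definition adj :: "'n::finite mat \<Rightarrow> 'n mat" where
  "adj X = (\<chi> i j. cnj (X$j$i))"

definition hs_inner :: "'n::finite mat \<Rightarrow> 'n mat \<Rightarrow> complex" where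
  "hs_inner A B = trace (adj A ** B)"

definition complex_linear_map :: "('n::finite mat \<Rightarrow> 'n mat) \<Rightarrow> bool" where
  "complex_linear_map T \<longleftrightarrow> (\<forall>X Y. T (X + Y) = T X + T Y) \<and> (\<forall>c X. T (c *c X) = c *c T X)"

definition semigroup :: "('n::finite mat \<Rightarrow> 'n mat) \<Rightarrow> real \<Rightarrow> 'n mat \<Rightarrow> 'n mat" where
  "semigroup L t X = (\<Sum>n. (t ^ n / fact n) *\<^sub>R (L ^^ n) X)"

text \<open>Positivity of a k x k block matrix with blocks in M_d, i.e. of an operator on C^k (x) C^d:
  its quadratic form is real and nonnegative.\<close>
definition psd_block :: "nat \<Rightarrow> (nat \<Rightarrow> nat \<Rightarrow> 'n::finite mat) \<Rightarrow> bool" where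
  "psd_block k X \<longleftrightarrow> (\<forall>v :: nat \<Rightarrow> complex^'n.
     (let q = (\<Sum>a<k. \<Sum>b<k. \<Sum>i\<in>UNIV. \<Sum>j\<in>UNIV. cnj (v a $ i) * X a b $ i $ j * v b $ j)
      in Im q = 0 \<and> Re q \<ge> 0))"

definition completely_positive :: "('n::finite mat \<Rightarrow> 'n mat) \<Rightarrow> bool" where
  "completely_positive T \<longleftrightarrow> (\<forall>k X. psd_block k X \<longrightarrow> psd_block k (\<lambda>a b. T (X a b)))"

definition trace_preserving :: "('n::finite mat \<Rightarrow> 'n mat) \<Rightarrow> bool" where
  "trace_preserving T \<longleftrightarrow> (\<forall>X. trace (T X) = trace X)"

definition liouvillian :: "('n::finite mat \<Rightarrow> 'n mat) \<Rightarrow> bool" where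
  "liouvillian L \<longleftrightarrow> complex_linear_map L \<and>
     (\<forall>t\<ge>0. completely_positive (semigroup L t) \<and> trace_preserving (semigroup L t))"

definition unital :: "('n::finite mat \<Rightarrow> 'n mat) \<Rightarrow> bool" where
  "unital L \<longleftrightarrow> L (mat 1) = 0"

definition reversible :: "('n::finite mat \<Rightarrow> 'n mat) \<Rightarrow> bool" where
  "reversible L \<longleftrightarrow> (\<forall>A B. hs_inner A (L B) = hs_inner (L A) B)"

definition unitary_mat :: "'n::finite mat \<Rightarrow> bool" where
  "unitary_mat U \<longleftrightarrow> adj U ** U = mat 1 \<and> U ** adj U = mat 1"

definition acu_basis :: "('g::{finite,ab_group_add} \<Rightarrow> 'n::finite mat) \<Rightarrow> bool" where
  "acu_basis U \<longleftrightarrow> CARD('g) = CARD('n)^2 \<and> U 0 = mat 1 \<and> (\<forall>i. unitary_mat (U i)) \<and>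
     (\<forall>i j. trace (adj (U i) ** U j) = (if i = j then of_nat CARD('n) else 0)) \<and>
     (\<forall>i j. \<exists>\<phi>. cmod \<phi> = 1 \<and> U i ** U j = \<phi> *c (U j ** U i)) \<and>
     (\<forall>i j. \<exists>\<phi>'. cmod \<phi>' = 1 \<and> U i ** U j = \<phi>' *c U (i + j))"

definition character :: "('g::ab_group_add \<Rightarrow> complex) \<Rightarrow> bool" where
  "character \<psi> \<longleftrightarrow> (\<forall>a b. \<psi> (a + b) = \<psi> a * \<psi> b) \<and> (\<forall>a. \<psi> a \<noteq> 0)"

definition char_iso :: "('g::{finite,ab_group_add} \<Rightarrow> 'g \<Rightarrow> complex) \<Rightarrow> bool" where
  "char_iso chi \<longleftrightarrow> (\<forall>i. character (chi i)) \<and> (\<forall>i j. chi (i + j) = (\<lambda>g. chi i g * chi j g)) \<and>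
     (\<forall>\<psi>. character \<psi> \<longrightarrow> (\<exists>!i. chi i = \<psi>))"

definition vnorm :: "real \<Rightarrow> ('g::finite \<Rightarrow> complex) \<Rightarrow> real" where
  "vnorm p f = ((1 / real CARD('g)) * (\<Sum>g\<in>UNIV. cmod (f g) powr p)) powr (1 / p)"

definition vinner :: "('g::finite \<Rightarrow> complex) \<Rightarrow> ('g \<Rightarrow> complex) \<Rightarrow> complex" where
  "vinner f h = (1 / of_nat CARD('g)) * (\<Sum>g\<in>UNIV. cnj (f g) * h g)"

definition fourier :: "('g::finite \<Rightarrow> 'g \<Rightarrow> complex) \<Rightarrow> ('g \<Rightarrow> complex) \<Rightarrow> 'g \<Rightarrow> complex" where
  "fourier chi f i = vinner (chi i) f"

definition classical_semigroup ::
  "('g::finite \<Rightarrow> 'g \<Rightarrow> complex) \<Rightarrow> ('g \<Rightarrow> complex) \<Rightarrow> real \<Rightarrow> ('g \<Rightarrow> complex) \<Rightarrow> 'g \<Rightarrow> complex" where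
  "classical_semigroup chi lam t f = (\<lambda>g. \<Sum>i\<in>UNIV. exp (lam i * of_real t) * fourier chi f i * chi i g)"

definition norm_2_4_V :: "(('g::finite \<Rightarrow> complex) \<Rightarrow> ('g \<Rightarrow> complex)) \<Rightarrow> real" where
  "norm_2_4_V A = (SUP f \<in> {f. \<exists>g. f g \<noteq> 0}. vnorm 4 (A f) / vnorm 2 f)"

text \<open>Normalized Schatten norm ||Y||_{p,1/d} = d^{-1/p} (tr |Y|^p)^{1/p} for even p = 2k,
  where |Y|^{2k} = (Y^* Y)^k.\<close>
definition mat_pow :: "'n::finite mat \<Rightarrow> nat \<Rightarrow> 'n mat" where
  "mat_pow A k = ((\<lambda>B. B ** A) ^^ k) (mat 1)"

definition schatten_norm_even :: "nat \<Rightarrow> 'n::finite mat \<Rightarrow> real" where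
  "schatten_norm_even k Y = real CARD('n) powr (- 1 / real (2 * k)) *
     (Re (trace (mat_pow (adj Y ** Y) k))) powr (1 / real (2 * k))"

definition norm_2_4_mat :: "('n::finite mat \<Rightarrow> 'n mat) \<Rightarrow> real" where
  "norm_2_4_mat S = (SUP X \<in> {X. X \<noteq> 0}. schatten_norm_even 2 (S X) / schatten_norm_even 1 X)"

end

theory Submission
  imports Defs
begin

lemma cscale_nth[simp]: "(c *c X) $ i $ j = c * X $ i $ j"
  by (simp add: cscale_def)
lemma adj_nth[simp]: "adj X $ i $ j = cnj (X $ j $ i)"
  by (simp add: adj_def)

lemma cscale_mul_left: "(c *c A) ** B = c *c (A ** B)"
  by (simp add: vec_eq_iff matrix_matrix_mult_def sum_distrib_left mult.assoc)
lemma cscale_mul_right: "A ** (c *c B) = c *c (A ** B)"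
  by (simp add: vec_eq_iff matrix_matrix_mult_def sum_distrib_left mult.left_commute)
lemma cscale_cscale: "a *c (b *c A) = (a * b) *c A"
  by (simp add: vec_eq_iff mult.assoc)
lemma cscale_one[simp]: "1 *c A = A"
  by (simp add: vec_eq_iff)
lemma cscale_zero[simp]: "0 *c A = 0" "c *c 0 = 0"
  by (simp_all add: vec_eq_iff)
lemma cscale_add: "c *c (A + B) = c *c A + c *c B" "(a + b) *c A = a *c A + b *c A"
  by (simp_all add: vec_eq_iff algebra_simps)
lemma trace_cscale: "trace (c *c A) = c * trace A"
  by (simp add: trace_def sum_distrib_left)
lemma adj_cscale: "adj (c *c A) = cnj c *c adj A"
  by (simp add: vec_eq_iff)
lemma adj_mul: "adj (A ** B) = adj B ** adj A"
  by (simp add: vec_eq_iff matrix_matrix_mult_def mult.commute)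
lemma adj_adj[simp]: "adj (adj A) = A"
  by (simp add: vec_eq_iff)
lemma adj_mat1[simp]: "adj (mat 1 :: 'n::finite mat) = mat 1"
  by (simp add: vec_eq_iff mat_def)
lemma adj_add: "adj (A + B) = adj A + adj B"
  by (simp add: vec_eq_iff)
lemma adj_sum: "adj (\<Sum>i\<in>S. A i) = (\<Sum>i\<in>S. adj (A i))"
  by (induct S rule: infinite_finite_induct) (simp_all add: adj_add vec_eq_iff)
lemma cscale_sum: "c *c (\<Sum>i\<in>S. A i) = (\<Sum>i\<in>S. c *c A i)"
  by (induct S rule: infinite_finite_induct) (simp_all add: cscale_add)
lemma mat_add_rdistrib: "((A::'a::semiring_1^'n^'m) + B) ** C = A ** C + B ** C"
  by (simp add: vec_eq_iff matrix_matrix_mult_def distrib_right sum.distrib)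
lemma sum_mul_left: "(\<Sum>i\<in>S. A i) ** (B::'n::finite mat) = (\<Sum>i\<in>S. A i ** B)"
  by (induct S rule: infinite_finite_induct) (simp_all add: mat_add_rdistrib)
lemma sum_mul_right: "(B::'n::finite mat) ** (\<Sum>i\<in>S. A i) = (\<Sum>i\<in>S. B ** A i)"
  by (induct S rule: infinite_finite_induct) (simp_all add: matrix_add_ldistrib)
lemma trace_sum: "trace (\<Sum>i\<in>S. A i :: 'n::finite mat) = (\<Sum>i\<in>S. trace (A i))"
  by (induct S rule: infinite_finite_induct) (simp_all add: trace_add trace_0[simplified])

lemma scaleR_cscale: "r *\<^sub>R (A::'n::finite mat) = complex_of_real r *c A"
  apply (simp add: vec_eq_iff) by (simp add: scaleR_conv_of_real)

lemma bl_cscale: "bounded_linear (\<lambda>z::complex. z *c (A::'n::finite mat))"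
proof -
  have "linear (\<lambda>z::complex. z *c A)"
    by (rule linearI) (simp_all add: cscale_add scaleR_cscale cscale_cscale scaleR_conv_of_real)
  then show ?thesis using linear_conv_bounded_linear by blast
qed

lemma trace_adj_mul: "trace (adj A ** B) = (\<Sum>k\<in>UNIV. \<Sum>l\<in>UNIV. cnj (A $ l $ k) * B $ l $ k)"
  by (simp add: trace_def matrix_matrix_mult_def)

locale acu = fixes U :: "'g::{finite,ab_group_add} \<Rightarrow> 'n::finite mat"
  assumes acu: "acu_basis U"
begin

lemma U0: "U 0 = mat 1" using acu by (simp add: acu_basis_def)
lemma orth: "trace (adj (U i) ** U j) = (if i = j then of_nat CARD('n) else 0)"
  using acu by (simp add: acu_basis_def)
lemma unit: "adj (U i) ** U i = mat 1" "U i ** adj (U i) = mat 1"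
  using acu by (simp_all add: acu_basis_def unitary_mat_def)
lemma phase: "\<exists>\<phi>. cmod \<phi> = 1 \<and> U i ** U j = \<phi> *c U (i + j)"
  using acu by (simp add: acu_basis_def)
lemma cardg: "CARD('g) = CARD('n)^2" using acu by (simp add: acu_basis_def)

lemma adjU: "\<exists>\<psi>. cmod \<psi> = 1 \<and> adj (U c) = \<psi> *c U (- c)"
proof -
  obtain \<phi> where p: "cmod \<phi> = 1" "U c ** U (-c) = \<phi> *c U (c + - c)" using phase by blast
  have "U (-c) = adj (U c) ** (U c ** U (-c))" by (simp add: matrix_mul_assoc unit)
  also have "\<dots> = \<phi> *c adj (U c)" using p by (simp add: U0 cscale_mul_right)
  finally have "adj (U c) = (1/\<phi>) *c U (-c)" using p(1) by (auto simp: cscale_cscale)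
  moreover have "cmod (1/\<phi>) = 1" using p(1) by (simp add: norm_divide)
  ultimately show ?thesis by blast
qed

lemma quad: "\<exists>\<omega>. cmod \<omega> = 1 \<and> (U b ** adj (U c)) ** U e = \<omega> *c U (b - c + e)"
proof -
  obtain \<psi> where a: "cmod \<psi> = 1" "adj (U c) = \<psi> *c U (- c)" using adjU by blast
  obtain \<phi>1 where b: "cmod \<phi>1 = 1" "U b ** U (-c) = \<phi>1 *c U (b + - c)" using phase by blast
  obtain \<phi>2 where c: "cmod \<phi>2 = 1" "U (b + - c) ** U e = \<phi>2 *c U (b + - c + e)" using phase by blast
  have "(U b ** adj (U c)) ** U e = (\<psi> * \<phi>1 * \<phi>2) *c U (b - c + e)"
    using a b c by (simp add: cscale_mul_left cscale_mul_right cscale_cscale mult_ac)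
  moreover have "cmod (\<psi> * \<phi>1 * \<phi>2) = 1" using a b c by (simp add: norm_mult)
  ultimately show ?thesis by blast
qed

lemma trace_quad: "cmod (trace (adj (U a) ** ((U b ** adj (U c)) ** U e)))
   = (if a = b - c + e then real CARD('n) else 0)"
proof -
  obtain \<omega> where w: "cmod \<omega> = 1" "(U b ** adj (U c)) ** U e = \<omega> *c U (b - c + e)" using quad by blast
  show ?thesis using w by (simp add: cscale_mul_right trace_cscale orth norm_mult)
qed

end
context acu begin

lemma complete: "(\<Sum>g\<in>UNIV. U g $ k $ l * cnj (U g $ k' $ l')) = (if k = k' \<and> l = l' then of_nat CARD('n) else 0)"
proof -
  have "card (UNIV::'g set) = card (UNIV::('n\<times>'n) set)"
    using cardg by (simp add: UNIV_Times_UNIV[symmetric] card_cartesian_product power2_eq_square del: UNIV_Times_UNIV)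
  then obtain \<pi> :: "'g \<Rightarrow> 'n \<times> 'n" where bij: "bij_betw \<pi> UNIV UNIV"
    using bij_betw_iff_card[of "UNIV::'g set" "UNIV::('n\<times>'n) set"] by auto
  define d :: complex where "d = of_nat CARD('n)"
  have d0: "d \<noteq> 0" by (simp add: d_def)
  define M where "M = (\<chi> r g. U g $ fst (\<pi> r) $ snd (\<pi> r))"
  define M' where "M' = (\<chi> g r. cnj (M $ r $ g) / d)"
  have "M' ** M = mat 1"
  proof (simp add: vec_eq_iff, intro allI)
    fix g g' :: 'g
    have "(M' ** M) $ g $ g' = (\<Sum>r\<in>UNIV. (\<lambda>p. cnj (U g $ fst p $ snd p) * U g' $ fst p $ snd p) (\<pi> r)) / d"
      by (simp add: M'_def M_def matrix_matrix_mult_def sum_divide_distrib)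
    also have "\<dots> = (\<Sum>p\<in>UNIV. cnj (U g $ fst p $ snd p) * U g' $ fst p $ snd p) / d"
      using sum.reindex_bij_betw[OF bij, of "\<lambda>p. cnj (U g $ fst p $ snd p) * U g' $ fst p $ snd p"] by simp
    also have "\<dots> = (\<Sum>a\<in>UNIV. \<Sum>b\<in>UNIV. cnj (U g $ a $ b) * U g' $ a $ b) / d"
      by (simp add: UNIV_Times_UNIV[symmetric] sum.cartesian_product split_def del: UNIV_Times_UNIV)
    also have "\<dots> = trace (adj (U g) ** U g') / d"
      unfolding trace_adj_mul
      by (subst (2) sum.swap) (rule refl)
    also have "\<dots> = mat 1 $ g $ g'" using d0 by (simp add: orth mat_def d_def)
    finally show "(M' ** M) $ g $ g' = mat 1 $ g $ g'" .
  qed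
  then have MM: "M ** M' = mat 1" using matrix_left_right_inverse by blast
  define r where "r = inv \<pi> (k, l)"
  define r' where "r' = inv \<pi> (k', l')"
  have pr: "\<pi> r = (k, l)" "\<pi> r' = (k', l')"
    unfolding r_def r'_def by (meson bij bij_betw_inv_into_right iso_tuple_UNIV_I)+
  have "(M ** M') $ r $ r' = (\<Sum>g\<in>UNIV. U g $ k $ l * cnj (U g $ k' $ l')) / d"
    by (simp add: M'_def M_def matrix_matrix_mult_def sum_divide_distrib pr)
  moreover have "(r = r') = (k = k' \<and> l = l')"
    using pr bij_betw_imp_inj_on[OF bij] by (metis UNIV_I inj_on_def prod.inject)
  ultimately show ?thesis using MM d0 by (auto simp: mat_def d_def split: if_splits)
qed

lemma expand: "X = (\<Sum>i\<in>UNIV. (hs_inner (U i) X / of_nat CARD('n)) *c U i)"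
proof -
  have "(\<Sum>i\<in>UNIV. (hs_inner (U i) X / of_nat CARD('n)) *c U i) $ k $ l = X $ k $ l" for k l
  proof -
  have "(\<Sum>i\<in>UNIV. (hs_inner (U i) X / of_nat CARD('n)) *c U i) $ k $ l
     = (\<Sum>i\<in>UNIV. \<Sum>p\<in>UNIV. \<Sum>q\<in>UNIV. X $ q $ p * (U i $ k $ l * cnj (U i $ q $ p)) / of_nat CARD('n))"
    by (simp add: sum_component hs_inner_def trace_adj_mul sum_divide_distrib sum_distrib_left mult_ac)
  also have "\<dots> = (\<Sum>p\<in>UNIV. \<Sum>q\<in>UNIV. X $ q $ p * (\<Sum>i\<in>UNIV. U i $ k $ l * cnj (U i $ q $ p)) / of_nat CARD('n))"
    by (simp add: sum.swap[of _ "UNIV::'g set"] sum_distrib_left sum_divide_distrib)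
  also have "\<dots> = (\<Sum>p\<in>UNIV. \<Sum>q\<in>UNIV. if k = q \<and> l = p then X $ q $ p else 0)"
    unfolding complete by (intro sum.cong refl) auto
  also have "\<dots> = (\<Sum>p\<in>UNIV. if l = p then X $ k $ p else 0)"
    by (rule sum.cong) (auto)
  also have "\<dots> = X $ k $ l" by simp
  finally show ?thesis .
  qed
  then show ?thesis by (simp add: vec_eq_iff)
qed

end

definition Qm :: "('g::finite \<Rightarrow> 'n::finite mat) \<Rightarrow> ('g \<Rightarrow> complex) \<Rightarrow> 'n mat" where
  "Qm U x = (\<Sum>i\<in>UNIV. x i *c U i)"

lemma mul_sums: "(\<Sum>a\<in>A. x a *c M a) ** (\<Sum>b\<in>B. z b *c (N b :: 'n::finite mat))
   = (\<Sum>a\<in>A. \<Sum>b\<in>B. (x a * z b) *c (M a ** N b))"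
  apply (simp only: sum_mul_left cscale_mul_left)
  apply (simp only: sum_mul_right cscale_mul_right cscale_sum cscale_cscale)
  done

lemma mul_sums2: "(\<Sum>a\<in>A. \<Sum>b\<in>B. x a b *c M a b) ** (\<Sum>c\<in>C. \<Sum>e\<in>E. z c e *c (N c e :: 'n::finite mat))
   = (\<Sum>a\<in>A. \<Sum>b\<in>B. \<Sum>c\<in>C. \<Sum>e\<in>E. (x a b * z c e) *c (M a b ** N c e))"
  apply (simp only: sum_mul_left cscale_mul_left)
  apply (simp only: sum_mul_right cscale_mul_right cscale_sum cscale_cscale)
  done

lemma adj_Qm: "adj (Qm U x) = (\<Sum>i\<in>UNIV. cnj (x i) *c adj (U i))"
  by (simp add: Qm_def adj_sum adj_cscale)

context acu begin

lemma trace_quadratic: "trace (adj (Qm U x) ** Qm U x) = of_nat CARD('n) * of_real (\<Sum>i\<in>UNIV. (cmod (x i))^2)"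
proof -
  have "trace (adj (Qm U x) ** Qm U x) = (\<Sum>a\<in>UNIV. \<Sum>b\<in>UNIV. (cnj (x a) * x b) * trace (adj (U a) ** U b))"
    unfolding adj_Qm by (simp only: Qm_def mul_sums trace_sum trace_cscale)
  also have "\<dots> = (\<Sum>a\<in>UNIV. (cnj (x a) * x a) * of_nat CARD('n))"
    by (simp add: orth if_distrib if_distribR cong: if_cong)
  also have "\<dots> = (\<Sum>a\<in>UNIV. of_nat CARD('n) * of_real ((cmod (x a))^2))"
    by (intro sum.cong refl) (simp only: complex_norm_square, simp add: mult_ac)
  finally show ?thesis by (simp add: sum_distrib_left)
qed

lemma trace_quartic:
  "cmod (trace ((adj (Qm U y) ** Qm U y) ** (adj (Qm U y) ** Qm U y)))
    \<le> real CARD('n) * (\<Sum>a\<in>UNIV. \<Sum>b\<in>UNIV. \<Sum>c\<in>UNIV. \<Sum>e\<in>UNIV.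
         if a = b - c + e then cmod (y a) * cmod (y b) * cmod (y c) * cmod (y e) else 0)"
proof -
  have "trace ((adj (Qm U y) ** Qm U y) ** (adj (Qm U y) ** Qm U y)) =
     (\<Sum>a\<in>UNIV. \<Sum>b\<in>UNIV. \<Sum>c\<in>UNIV. \<Sum>e\<in>UNIV. (cnj (y a) * y b * (cnj (y c) * y e)) *
        trace ((adj (U a) ** U b) ** (adj (U c) ** U e)))"
    unfolding adj_Qm by (simp only: Qm_def mul_sums mul_sums2 trace_sum trace_cscale)
  also have "\<dots> = (\<Sum>a\<in>UNIV. \<Sum>b\<in>UNIV. \<Sum>c\<in>UNIV. \<Sum>e\<in>UNIV. (cnj (y a) * y b * (cnj (y c) * y e)) *
        trace (adj (U a) ** ((U b ** adj (U c)) ** U e)))"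
    by (simp add: matrix_mul_assoc)
  finally have eq: "trace ((adj (Qm U y) ** Qm U y) ** (adj (Qm U y) ** Qm U y)) = \<dots>" .
  have "cmod (\<Sum>a\<in>UNIV. \<Sum>b\<in>UNIV. \<Sum>c\<in>UNIV. \<Sum>e\<in>UNIV. (cnj (y a) * y b * (cnj (y c) * y e)) *
        trace (adj (U a) ** ((U b ** adj (U c)) ** U e)))
     \<le> (\<Sum>a\<in>UNIV. \<Sum>b\<in>UNIV. \<Sum>c\<in>UNIV. \<Sum>e\<in>UNIV. cmod ((cnj (y a) * y b * (cnj (y c) * y e)) *
        trace (adj (U a) ** ((U b ** adj (U c)) ** U e))))"
    by (intro order.trans[OF norm_sum] sum_mono)+ simp
  also have "\<dots> = (\<Sum>a\<in>UNIV. \<Sum>b\<in>UNIV. \<Sum>c\<in>UNIV. \<Sum>e\<in>UNIV. real CARD('n) *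
         (if a = b - c + e then cmod (y a) * cmod (y b) * cmod (y c) * cmod (y e) else 0))"
    by (intro sum.cong refl) (auto simp: norm_mult trace_quad)
  also have "\<dots> = real CARD('n) * (\<Sum>a\<in>UNIV. \<Sum>b\<in>UNIV. \<Sum>c\<in>UNIV. \<Sum>e\<in>UNIV.
         if a = b - c + e then cmod (y a) * cmod (y b) * cmod (y c) * cmod (y e) else 0)"
    by (simp add: sum_distrib_left)
  finally show ?thesis using eq by simp
qed

end

lemma swap4: "(\<Sum>g\<in>G. \<Sum>a\<in>A. \<Sum>b\<in>B. \<Sum>c\<in>C. \<Sum>e\<in>E. f a b c e g) = (\<Sum>a\<in>A. \<Sum>b\<in>B. \<Sum>c\<in>C. \<Sum>e\<in>E. \<Sum>g\<in>G. f a b c e g :: 'z::comm_monoid_add)"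
  by (simp add: sum.swap[of _ G])

lemma swap3: "(\<Sum>g\<in>G. \<Sum>a\<in>A. \<Sum>b\<in>B. f a b g) = (\<Sum>a\<in>A. \<Sum>b\<in>B. \<Sum>g\<in>G. f a b g :: 'z::comm_monoid_add)"
  by (simp add: sum.swap[of _ G])

lemma swap_mid: "(\<Sum>a\<in>A. \<Sum>c\<in>C. \<Sum>b\<in>B. f a b c) = (\<Sum>a\<in>A. \<Sum>b\<in>B. \<Sum>c\<in>C. f a b c :: 'z::comm_monoid_add)"
  by (rule sum.cong[OF refl], rule sum.swap)

definition Fv :: "('g::finite \<Rightarrow> 'g \<Rightarrow> complex) \<Rightarrow> ('g \<Rightarrow> complex) \<Rightarrow> 'g \<Rightarrow> complex" where
  "Fv chi z = (\<lambda>g. \<Sum>i\<in>UNIV. z i * chi i g)"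

locale chars = fixes chi :: "'g::{finite,ab_group_add} \<Rightarrow> 'g \<Rightarrow> complex"
  assumes ci: "char_iso chi"
begin

lemma chi_add: "chi (i + j) g = chi i g * chi j g"
  using ci by (simp add: char_iso_def)
lemma chi_char: "character (chi i)" using ci by (simp add: char_iso_def)
lemma chi_hom: "chi i (a + b) = chi i a * chi i b" "chi i a \<noteq> 0"
  using chi_char[of i] by (simp_all add: character_def)
lemma chi_zero: "chi 0 g = 1"
proof -
  have "chi 0 g = chi 0 g * chi 0 g" using chi_add[of 0 0 g] by simp
  then show ?thesis using chi_hom(2)[of 0 g] by simp
qed
lemma chi_inj: "chi k = chi 0 \<Longrightarrow> k = 0"
  using ci chi_char[of 0] unfolding char_iso_def by metis

lemma chi_norm: "cmod (chi i g) = 1"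
proof -
  let ?P = "\<Prod>h\<in>UNIV. chi i h"
  have P0: "?P \<noteq> 0" using chi_hom(2) by simp
  have "bij_betw ((+) g) UNIV UNIV" by simp
  then have "(\<Prod>h\<in>UNIV. chi i (g + h)) = ?P" using prod.reindex_bij_betw by blast
  moreover have "(\<Prod>h\<in>UNIV. chi i (g + h)) = chi i g ^ CARD('g) * ?P"
    by (simp add: chi_hom(1) prod.distrib)
  ultimately have "chi i g ^ CARD('g) = 1" using P0 by simp
  then show ?thesis using power_eq_1_iff by fastforce
qed

lemma chi_neg: "chi (- a) g = cnj (chi a g)"
proof -
  have "chi (- a) g * chi a g = 1" using chi_add[of "-a" a g] by (simp add: chi_zero)
  moreover have "cnj (chi a g) * chi a g = 1"
    using complex_norm_square[of "chi a g"] chi_norm[of a g] by (simp add: mult.commute)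
  ultimately show ?thesis using chi_hom(2)[of a g] by (metis mult_right_cancel)
qed

lemma sum_chi: "(\<Sum>g\<in>UNIV. chi k g) = (if k = 0 then of_nat CARD('g) else 0)"
proof (cases "k = 0")
  case True then show ?thesis by (simp add: chi_zero)
next
  case False
  then have "chi k \<noteq> chi 0" using chi_inj by blast
  then obtain h where "chi k h \<noteq> chi 0 h" by (meson ext)
  then have h: "chi k h \<noteq> 1" by (simp add: chi_zero)
  let ?S = "\<Sum>g\<in>UNIV. chi k g"
  have "bij_betw ((+) h) UNIV UNIV" by simp
  then have "(\<Sum>g\<in>UNIV. chi k (h + g)) = ?S" using sum.reindex_bij_betw by blast
  moreover have "(\<Sum>g\<in>UNIV. chi k (h + g)) = chi k h * ?S"
    by (simp add: chi_hom(1) sum_distrib_left)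
  ultimately have "(chi k h - 1) * ?S = 0" by (simp add: algebra_simps)
  then show ?thesis using h False by simp
qed

lemma cnj_chi_mul: "cnj (chi a g) * chi b g = chi (b - a) g"
  by (simp add: chi_neg[symmetric] chi_add[symmetric] mult.commute)

lemma vinner_Fv: "vinner (Fv chi z) (Fv chi w) = (\<Sum>a\<in>UNIV. cnj (z a) * w a)"
proof -
  have "vinner (Fv chi z) (Fv chi w) = (1 / of_nat CARD('g)) *
     (\<Sum>g\<in>UNIV. \<Sum>b\<in>UNIV. \<Sum>a\<in>UNIV. (cnj (z a) * w b) * (cnj (chi a g) * chi b g))"
    by (simp add: vinner_def Fv_def sum_product cnj_sum mult_ac)
  also have "\<dots> = (1 / of_nat CARD('g)) *
     (\<Sum>b\<in>UNIV. \<Sum>a\<in>UNIV. (cnj (z a) * w b) * (\<Sum>g\<in>UNIV. chi (b - a) g))"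
    using swap3[where f="\<lambda>b a g. (cnj (z a) * w b) * (cnj (chi a g) * chi b g)" and G=UNIV and A=UNIV and B=UNIV]
    by (simp add: cnj_chi_mul sum_distrib_left)
  also have "\<dots> = (\<Sum>a\<in>UNIV. cnj (z a) * w a)"
    by (simp add: sum_chi sum_distrib_left if_distrib if_distribR cong: if_cong)
  finally show ?thesis .
qed

lemma vinner_chi_Fv: "vinner (chi j) (Fv chi w) = w j"
proof -
  have "chi j = Fv chi (\<lambda>i. if i = j then 1 else 0)"
    by (simp add: Fv_def fun_eq_iff if_distrib if_distribR cong: if_cong)
  then show ?thesis by (simp add: vinner_Fv if_distrib if_distribR cong: if_cong)
qed

lemma quartic_Fv:
  "(\<Sum>g\<in>UNIV. cnj (Fv chi z g) * Fv chi z g * (cnj (Fv chi z g) * Fv chi z g)) / of_nat CARD('g)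
   = (\<Sum>a\<in>UNIV. \<Sum>b\<in>UNIV. \<Sum>c\<in>UNIV. \<Sum>e\<in>UNIV.
       if a = b - c + e then cnj (z a) * z b * (cnj (z c) * z e) else 0)"
proof -
  have "(\<Sum>g\<in>UNIV. cnj (Fv chi z g) * Fv chi z g * (cnj (Fv chi z g) * Fv chi z g))
     = (\<Sum>g\<in>UNIV. \<Sum>a\<in>UNIV. \<Sum>c\<in>UNIV. \<Sum>b\<in>UNIV. \<Sum>e\<in>UNIV.
        (cnj (z a) * z b * (cnj (z c) * z e)) * chi (b - a + (e - c)) g)"
  proof (rule sum.cong[OF refl])
    fix g
    show "cnj (Fv chi z g) * Fv chi z g * (cnj (Fv chi z g) * Fv chi z g) =
      (\<Sum>a\<in>UNIV. \<Sum>c\<in>UNIV. \<Sum>b\<in>UNIV. \<Sum>e\<in>UNIV.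
        (cnj (z a) * z b * (cnj (z c) * z e)) * chi (b - a + (e - c)) g)"
      by (simp add: Fv_def cnj_sum sum_product sum_distrib_left sum_distrib_right chi_add
          cnj_chi_mul[symmetric] mult_ac)
  qed
  also have "\<dots> = (\<Sum>a\<in>UNIV. \<Sum>c\<in>UNIV. \<Sum>b\<in>UNIV. \<Sum>e\<in>UNIV.
        (cnj (z a) * z b * (cnj (z c) * z e)) * (\<Sum>g\<in>UNIV. chi (b - a + (e - c)) g))"
    using swap4[where f="\<lambda>a c b e g. (cnj (z a) * z b * (cnj (z c) * z e)) * chi (b - a + (e - c)) g"
       and G=UNIV and A=UNIV and B=UNIV and C=UNIV and E=UNIV]
    by (simp add: sum_distrib_left)
  also have "\<dots> = of_nat CARD('g) * (\<Sum>a\<in>UNIV. \<Sum>c\<in>UNIV. \<Sum>b\<in>UNIV. \<Sum>e\<in>UNIV.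
       if a = b - c + e then cnj (z a) * z b * (cnj (z c) * z e) else 0)"
    unfolding sum_chi sum_distrib_left
    by (intro sum.cong refl) (auto simp: algebra_simps eq_neg_iff_add_eq_0)
  also have "\<dots> = of_nat CARD('g) * (\<Sum>a\<in>UNIV. \<Sum>b\<in>UNIV. \<Sum>c\<in>UNIV. \<Sum>e\<in>UNIV.
       if a = b - c + e then cnj (z a) * z b * (cnj (z c) * z e) else 0)"
    by (simp only: swap_mid[where f="\<lambda>a b c. \<Sum>e\<in>UNIV. if a = b - c + e then cnj (z a) * z b * (cnj (z c) * z e) else 0" and A=UNIV and B=UNIV and C=UNIV])
  finally show ?thesis by simp
qed

end

lemma mat_pow_1: "mat_pow A 1 = A" "mat_pow A (Suc 0) = A" by (simp_all add: mat_pow_def)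
lemma mat_pow_2: "mat_pow A 2 = A ** A" by (simp add: mat_pow_def numeral_2_eq_2)

lemma Re_trace_adj_nonneg: "0 \<le> Re (trace (adj A ** A))"
proof -
  have "Re (trace (adj A ** A)) = (\<Sum>k\<in>UNIV. \<Sum>l\<in>UNIV. (cmod (A $ l $ k))^2)"
    by (simp add: trace_adj_mul complex_mult_cnj cmod_power2 mult.commute)
  then show ?thesis by (simp add: sum_nonneg)
qed

lemma adj_herm: "adj (adj Y ** Y) = adj Y ** Y" by (simp add: adj_mul)

lemma Re_trace_sq_nonneg: "0 \<le> Re (trace ((adj Y ** Y) ** (adj Y ** Y)))"
  using Re_trace_adj_nonneg[of "adj Y ** Y"] by (simp add: adj_herm)

locale setting = acu U + chars chi
  for U :: "'g::{finite,ab_group_add} \<Rightarrow> 'n::finite mat" and chi :: "'g \<Rightarrow> 'g \<Rightarrow> complex" +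
  fixes L :: "'n mat \<Rightarrow> 'n mat" and lam :: "'g \<Rightarrow> complex" and t :: real
  assumes liou: "liouvillian L" and rev: "reversible L" and eig: "\<And>i. L (U i) = lam i *c U i"
    and t0: "t \<ge> 0"
begin

lemma L_add: "L (X + Y) = L X + L Y" and L_scale: "L (c *c X) = c *c L X"
  using liou by (simp_all add: liouvillian_def complex_linear_map_def)
lemma L_zero: "L 0 = 0"
  using L_scale[of 0 0] by simp
lemma L_sum: "L (\<Sum>i\<in>S. A i) = (\<Sum>i\<in>S. L (A i))"
  by (induct S rule: infinite_finite_induct) (simp_all add: L_zero L_add)

lemma L_pow_Qm: "(L ^^ n) (Qm U x) = Qm U (\<lambda>i. x i * lam i ^ n)"
proof (induct n)
  case 0 then show ?case by simp
next
  case (Suc n)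
  have "(L ^^ Suc n) (Qm U x) = L (Qm U (\<lambda>i. x i * lam i ^ n))" by (simp add: Suc)
  also have "\<dots> = Qm U (\<lambda>i. x i * lam i ^ Suc n)"
    by (simp add: Qm_def L_sum L_scale eig cscale_cscale mult_ac)
  finally show ?case .
qed

lemma lam_real: "lam i = of_real (Re (lam i))"
proof -
  have "hs_inner (U i) (L (U i)) = hs_inner (L (U i)) (U i)" using rev by (simp add: reversible_def)
  then have "lam i * of_nat CARD('n) = cnj (lam i) * of_nat CARD('n)"
    by (simp add: hs_inner_def eig cscale_mul_left cscale_mul_right trace_cscale orth adj_cscale)
  then have "lam i = cnj (lam i)" by simp
  then show ?thesis by (metis Reals_cnj_iff complex_is_Real_iff of_real_Re)
qed

lemma semigroup_Qm: "semigroup L t (Qm U x) = Qm U (\<lambda>i. x i * exp (lam i * of_real t))"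
proof -
  have eq: "(\<lambda>n. (t ^ n / fact n) *\<^sub>R (L ^^ n) (Qm U x)) =
     (\<lambda>n. \<Sum>i\<in>UNIV. (x i * ((of_real t * lam i) ^ n /\<^sub>R fact n)) *c U i)"
    unfolding L_pow_Qm by (simp add: Qm_def scaleR_cscale cscale_sum cscale_cscale fun_eq_iff
        scaleR_conv_of_real power_mult_distrib mult_ac divide_inverse)
  have "(\<lambda>n. \<Sum>i\<in>UNIV. (x i * ((of_real t * lam i) ^ n /\<^sub>R fact n)) *c U i) sums
        (\<Sum>i\<in>UNIV. (x i * exp (of_real t * lam i)) *c U i)"
  proof (rule sums_sum)
    fix i
    show "(\<lambda>n. (x i * ((of_real t * lam i) ^ n /\<^sub>R fact n)) *c U i) sums ((x i * exp (of_real t * lam i)) *c U i)"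
      using bounded_linear.sums[OF bl_cscale[of "U i"] sums_mult[OF exp_converges[of "of_real t * lam i"], of "x i"]] by simp
  qed
  then show ?thesis unfolding semigroup_def eq
    by (simp add: sums_unique[symmetric] Qm_def mult.commute)
qed

end

lemma Re_cnj_mult_self: "Re (cnj w * w) = (cmod w)^2"
  using cmod_power2[of w] by (simp add: power2_eq_square)

lemma cnj_mult_self: "cnj w * w = complex_of_real ((cmod w)^2)"
  by (metis complex_norm_square mult.commute)

lemma quart_self: "Re (cnj w * w * (cnj w * w)) = (cmod w)^4"
  unfolding cnj_mult_self by (simp add: power2_eq_square power4_eq_xxxx mult_ac)

lemma vnorm2_eq: "vnorm 2 (f::'g::finite \<Rightarrow> complex) = sqrt ((\<Sum>g\<in>UNIV. (cmod (f g))^2) / real CARD('g))"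
  by (simp add: vnorm_def powr_half_sqrt sum_nonneg)

lemma vnorm2_Re: "(\<Sum>g\<in>UNIV. (cmod (f g))^2) / real CARD('g) = Re (vinner f (f::'g::finite \<Rightarrow> complex))"
proof -
  have "vinner f f = complex_of_real ((\<Sum>g\<in>UNIV. (cmod (f g))^2) / real CARD('g))"
    by (simp add: vinner_def cnj_mult_self)
  then show ?thesis by simp
qed

lemma vnorm4_eq: "vnorm 4 (f::'g::finite \<Rightarrow> complex) = ((\<Sum>g\<in>UNIV. (cmod (f g))^4) / real CARD('g)) powr (1/4)"
  by (simp add: vnorm_def)

lemma vnorm_bound:
  assumes "\<And>g. cmod (h g) \<le> B"
  shows "vnorm 4 (h::'g::finite \<Rightarrow> complex) \<le> B"
proof -
  have B0: "0 \<le> B" using assms[of undefined] norm_ge_zero order.trans by blast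
  have "(\<Sum>g\<in>UNIV. (cmod (h g))^4) \<le> (\<Sum>g\<in>(UNIV::'g set). B^4)"
    by (intro sum_mono power_mono assms) simp
  then have "(\<Sum>g\<in>UNIV. (cmod (h g))^4) / real CARD('g) \<le> B^4"
    by (simp add: divide_le_eq mult.commute)
  then have "((\<Sum>g\<in>UNIV. (cmod (h g))^4) / real CARD('g)) powr (1/4) \<le> (B^4) powr (1/4)"
    by (intro powr_mono2) (auto intro!: divide_nonneg_nonneg sum_nonneg)
  also have "(B^4) powr (1/4) = B"
  proof -
    have e: "B^4 = B powr 4" using B0 by simp
    show ?thesis unfolding e using B0 by (simp add: powr_powr del: powr_numeral)
  qed
  finally show ?thesis by (simp add: vnorm4_eq)
qed

context setting begin

lemma vnorm2_Fv: "vnorm 2 (Fv chi z) = sqrt (\<Sum>i\<in>UNIV. (cmod (z i))^2)"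
  unfolding vnorm2_eq vnorm2_Re vinner_Fv by (simp add: cnj_mult_self)

lemma vnorm4_Fv:
  assumes "\<And>i. 0 \<le> w i"
  shows "vnorm 4 (Fv chi (\<lambda>i. complex_of_real (w i))) =
    (\<Sum>a\<in>UNIV. \<Sum>b\<in>UNIV. \<Sum>c\<in>UNIV. \<Sum>e\<in>UNIV.
         if a = b - c + e then w a * w b * w c * w e else 0) powr (1/4)"
proof -
  let ?F = "Fv chi (\<lambda>i. complex_of_real (w i))"
  have "(\<Sum>g\<in>UNIV. (cmod (?F g))^4) / real CARD('g)
     = Re ((\<Sum>g\<in>UNIV. cnj (?F g) * ?F g * (cnj (?F g) * ?F g)) / of_nat CARD('g))"
    unfolding quart_self[symmetric] by (simp add: Re_divide_of_nat)
  also have "\<dots> = (\<Sum>a\<in>UNIV. \<Sum>b\<in>UNIV. \<Sum>c\<in>UNIV. \<Sum>e\<in>UNIV.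
         if a = b - c + e then w a * w b * w c * w e else 0)"
    unfolding quartic_Fv by (simp add: if_distrib if_distribR mult_ac cong: if_cong)
  finally show ?thesis by (simp add: vnorm4_eq)
qed

lemma schatten1_Qm: "schatten_norm_even 1 (Qm U x) = sqrt (\<Sum>i\<in>UNIV. (cmod (x i))^2)"
proof -
  let ?s = "\<Sum>i\<in>UNIV. (cmod (x i))^2"
  let ?d = "real CARD('n)"
  have s0: "0 \<le> ?s" by (simp add: sum_nonneg)
  have "schatten_norm_even 1 (Qm U x) = ?d powr (-1/2) * (?d * ?s) powr (1/2)"
    by (simp add: schatten_norm_even_def mat_pow_1 trace_quadratic)
  also have "\<dots> = (?d powr (-1/2) * ?d powr (1/2)) * ?s powr (1/2)"
    using s0 by (simp add: powr_mult)
  also have "?d powr (-1/2) * ?d powr (1/2) = 1"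
    by (simp add: powr_add[symmetric])
  finally show ?thesis using s0 by (simp add: powr_half_sqrt)
qed

lemma schatten2_Qm: "schatten_norm_even 2 (Qm U y) \<le>
    (\<Sum>a\<in>UNIV. \<Sum>b\<in>UNIV. \<Sum>c\<in>UNIV. \<Sum>e\<in>UNIV.
         if a = b - c + e then cmod (y a) * cmod (y b) * cmod (y c) * cmod (y e) else 0) powr (1/4)"
proof -
  let ?S = "\<Sum>a\<in>UNIV. \<Sum>b\<in>UNIV. \<Sum>c\<in>UNIV. \<Sum>e\<in>UNIV.
         if a = b - c + e then cmod (y a) * cmod (y b) * cmod (y c) * cmod (y e) else 0"
  let ?d = "real CARD('n)"
  let ?T = "trace ((adj (Qm U y) ** Qm U y) ** (adj (Qm U y) ** Qm U y))"
  have S0: "0 \<le> ?S" by (intro sum_nonneg) auto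
  have T0: "0 \<le> Re ?T" by (rule Re_trace_sq_nonneg)
  have "Re ?T \<le> ?d * ?S" using complex_Re_le_cmod[of ?T] trace_quartic[of y] by linarith
  then have "(Re ?T) powr (1/4) \<le> (?d * ?S) powr (1/4)" using T0 by (intro powr_mono2) auto
  then have "schatten_norm_even 2 (Qm U y) \<le> ?d powr (-1/4) * (?d * ?S) powr (1/4)"
    by (simp add: schatten_norm_even_def mat_pow_2)
  also have "\<dots> = (?d powr (-1/4) * ?d powr (1/4)) * ?S powr (1/4)"
    using S0 by (simp add: powr_mult)
  also have "?d powr (-1/4) * ?d powr (1/4) = 1"
    by (simp add: powr_add[symmetric])
  finally show ?thesis by simp
qed

lemma exp_lam: "exp (lam i * of_real t) = complex_of_real (exp (Re (lam i) * t))"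
  by (subst lam_real) (simp add: exp_of_real[symmetric])

lemma P_Fv: "classical_semigroup chi lam t (Fv chi (\<lambda>i. complex_of_real (cmod (x i)))) =
    Fv chi (\<lambda>i. complex_of_real (cmod (x i * exp (lam i * of_real t))))"
  unfolding classical_semigroup_def fourier_def vinner_chi_Fv exp_lam
  by (simp add: Fv_def norm_mult mult_ac fun_eq_iff)

end

context setting begin

abbreviation "P \<equiv> classical_semigroup chi lam t"

lemma vnorm2_pos: "\<exists>g. f g \<noteq> 0 \<Longrightarrow> 0 < vnorm 2 (f :: 'g \<Rightarrow> complex)"
proof -
  assume "\<exists>g. f g \<noteq> 0"
  then obtain h where h: "f h \<noteq> 0" by blast
  have "0 < (\<Sum>g\<in>UNIV. (cmod (f g))^2)"
    by (rule sum_pos2[of UNIV h]) (use h in auto)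
  then show ?thesis by (simp add: vnorm2_eq)
qed

lemma ptwise: "cmod (f h) \<le> sqrt (real CARD('g)) * vnorm 2 (f :: 'g \<Rightarrow> complex)"
proof -
  have "sqrt (real CARD('g)) * vnorm 2 f = sqrt (\<Sum>g\<in>UNIV. (cmod (f g))^2)"
    by (simp add: vnorm2_eq real_sqrt_mult[symmetric])
  moreover have "cmod (f h) = sqrt ((cmod (f h))^2)" by simp
  moreover have "(cmod (f h))^2 \<le> (\<Sum>g\<in>UNIV. (cmod (f g))^2)"
    by (rule member_le_sum) auto
  ultimately show ?thesis by (metis real_sqrt_le_mono)
qed

lemma fourier_bound: "cmod (fourier chi f i) \<le> sqrt (real CARD('g)) * vnorm 2 (f :: 'g \<Rightarrow> complex)"
proof -
  let ?v = "sqrt (real CARD('g)) * vnorm 2 f"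
  have "cmod (fourier chi f i) = cmod (\<Sum>g\<in>UNIV. cnj (chi i g) * f g) / real CARD('g)"
    by (simp add: fourier_def vinner_def norm_mult norm_divide)
  also have "\<dots> \<le> (\<Sum>g\<in>UNIV. cmod (f g)) / real CARD('g)"
    by (intro divide_right_mono order.trans[OF norm_sum]) (auto simp: norm_mult chi_norm)
  also have "\<dots> \<le> (\<Sum>g\<in>(UNIV::'g set). ?v) / real CARD('g)"
    by (intro divide_right_mono sum_mono ptwise) auto
  also have "\<dots> = ?v" by simp
  finally show ?thesis .
qed

definition "K = (\<Sum>i\<in>UNIV. exp (Re (lam i) * t)) * sqrt (real CARD('g))"

lemma P_bound: "cmod (P f g) \<le> K * vnorm 2 f"
proof -
  have "cmod (P f g) \<le> (\<Sum>i\<in>UNIV. cmod (exp (lam i * of_real t) * fourier chi f i * chi i g))"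
    unfolding classical_semigroup_def by (rule norm_sum)
  also have "\<dots> \<le> (\<Sum>i\<in>UNIV. exp (Re (lam i) * t) * (sqrt (real CARD('g)) * vnorm 2 f))"
    by (intro sum_mono) (auto simp: norm_mult chi_norm exp_lam intro!: mult_left_mono fourier_bound)
  also have "\<dots> = K * vnorm 2 f" unfolding K_def by (simp add: sum_distrib_left sum_distrib_right mult_ac)
  finally show ?thesis .
qed

lemma bdd: "bdd_above ((\<lambda>f. vnorm 4 (P f) / vnorm 2 f) ` {f. \<exists>g. f g \<noteq> 0})"
proof (rule bdd_aboveI2)
  fix f :: "'g \<Rightarrow> complex" assume "f \<in> {f. \<exists>g. f g \<noteq> 0}"
  then have v: "0 < vnorm 2 f" using vnorm2_pos by blast
  have "vnorm 4 (P f) \<le> K * vnorm 2 f" by (rule vnorm_bound) (rule P_bound)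
  then show "vnorm 4 (P f) / vnorm 2 f \<le> K" using v by (simp add: pos_divide_le_eq)
qed

lemma key:
  assumes X: "X \<noteq> 0"
  shows "schatten_norm_even 2 (semigroup L t X) / schatten_norm_even 1 X \<le> norm_2_4_V P"
proof -
  define x where "x i = hs_inner (U i) X / of_nat CARD('n)" for i
  have XQ: "X = Qm U x" unfolding Qm_def x_def by (rule expand)
  define y where "y i = x i * exp (lam i * of_real t)" for i
  have YQ: "semigroup L t X = Qm U y" unfolding XQ y_def by (rule semigroup_Qm)
  define f' where "f' = Fv chi (\<lambda>i. complex_of_real (cmod (x i)))"
  let ?s = "\<Sum>i\<in>UNIV. (cmod (x i))^2"
  have f'nz: "f' \<in> {f. \<exists>g. f g \<noteq> 0}"
  proof (rule ccontr)
    assume "f' \<notin> {f. \<exists>g. f g \<noteq> 0}"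
    then have "f' = (\<lambda>_. 0)" by auto
    then have "\<And>j. complex_of_real (cmod (x j)) = 0"
      using vinner_chi_Fv[of _ "\<lambda>i. complex_of_real (cmod (x i))"] unfolding f'_def
      by (simp add: vinner_def)
    then have "x = (\<lambda>_. 0)" by auto
    then have "X = 0" using XQ by (simp add: Qm_def)
    then show False using X by simp
  qed
  have n1: "schatten_norm_even 1 X = vnorm 2 f'"
    unfolding XQ schatten1_Qm f'_def vnorm2_Fv by simp
  have n2: "schatten_norm_even 2 (semigroup L t X) \<le> vnorm 4 (P f')"
    unfolding YQ f'_def P_Fv y_def[symmetric]
    using schatten2_Qm[of y] vnorm4_Fv[of "\<lambda>i. cmod (y i)"]
    by simp
  have pos: "0 < vnorm 2 f'" using f'nz vnorm2_pos by blast
  have "schatten_norm_even 2 (semigroup L t X) / schatten_norm_even 1 X \<le> vnorm 4 (P f') / vnorm 2 f'"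
    unfolding n1 using n2 pos by (simp add: divide_right_mono)
  also have "\<dots> \<le> norm_2_4_V P"
    unfolding norm_2_4_V_def by (rule cSUP_upper[OF f'nz bdd])
  finally show ?thesis .
qed

lemma main: "norm_2_4_mat (semigroup L t) \<le> norm_2_4_V P"
proof -
  have "mat 1 \<noteq> (0 :: 'n mat)" by (simp add: vec_eq_iff mat_def)
  then have ne: "{X::'n mat. X \<noteq> 0} \<noteq> {}" by blast
  show ?thesis unfolding norm_2_4_mat_def
    by (rule cSUP_least[OF ne]) (use key in auto)
qed

end
theorem mainTheorem19:
  fixes L :: "'n::finite mat \<Rightarrow> 'n mat"
    and U :: "'g::{finite,ab_group_add} \<Rightarrow> 'n mat"
    and lam :: "'g \<Rightarrow> complex"
    and chi :: "'g \<Rightarrow> 'g \<Rightarrow> complex"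
    and t :: real
  assumes "liouvillian L" and "unital L" and "reversible L"
    and "acu_basis U"
    and "\<And>i. L (U i) = lam i *c U i"
    and "char_iso chi"
    and "t \<ge> 0"
  shows "norm_2_4_mat (semigroup L t) \<le> norm_2_4_V (classical_semigroup chi lam t)"
proof -
  have "setting U chi L lam t"
    using assms by (simp add: setting_def setting_axioms_def acu_def chars_def)
  then interpret setting U chi L lam t .
  show ?thesis by (rule main)
qed

end
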